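(* For all $m$, $n\le m$ and $0<\rho<n$, $$K_{\mathrm R}(q^m,n,\rho)\le\frac{q^{mn}}{V_\rho(q^m,n)}\left[1+\ln\big(V_\rho(q^m,n)\big)\right].$$
   Context: The rank $\mathrm{rk}(\mathbf x)$ of $\mathbf x\in\mathrm{GF}(q^m)^n$ is the maximum number of its coordinates linearly independent over $\mathrm{GF}(q)$, and $d_{\mathrm R}(\mathbf x,\mathbf y)=\mathrm{rk}(\mathbf x-\mathbf y)$. $K_{\mathrm R}(q^m,n,\rho)$ is the minimum cardinality of a code in $\mathrm{GF}(q^m)^n$ with rank covering radius $\rho$ (covering radius $=\max_{\mathbf x}\min_{\mathbf c\in C}d_{\mathrm R}(\mathbf x,\mathbf c)$). $V_\rho(q^m,n)=\sum_{u=0}^\rho{n\brack u}\alpha(m,u)$ with $\alpha(m,0)=1$, $\alpha(m,u)=\prod_{i=0}^{u-1}(q^m-q^i)$, ${n\brack u}=\alpha(n,u)/\alpha(u,u)$. *)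

theory Defs
  imports Complex_Main
begin

text \<open>GF(q^m) is modelled by a finite field type 'a; GF(q) by a subfield K of 'a
  with card K = q.  Vectors of GF(q^m)^n are functions nat => 'a vanishing outside {0..<n}.\<close>

definition is_subfield :: "'a::field set \<Rightarrow> bool" where
  "is_subfield K \<longleftrightarrow> 0 \<in> K \<and> 1 \<in> K \<and> (\<forall>a\<in>K. \<forall>b\<in>K. a + b \<in> K \<and> a * b \<in> K)
     \<and> (\<forall>a\<in>K. - a \<in> K) \<and> (\<forall>a\<in>K. a \<noteq> 0 \<longrightarrow> inverse a \<in> K)"

definition vecs :: "nat \<Rightarrow> (nat \<Rightarrow> 'a::zero) set" where
  "vecs n = {x. \<forall>i. n \<le> i \<longrightarrow> x i = 0}"

definition lin_indep_over :: "'a::field set \<Rightarrow> (nat \<Rightarrow> 'a) \<Rightarrow> nat set \<Rightarrow> bool" where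
  "lin_indep_over K x S \<longleftrightarrow>
     (\<forall>c. (\<forall>i\<in>S. c i \<in> K) \<longrightarrow> (\<Sum>i\<in>S. c i * x i) = 0 \<longrightarrow> (\<forall>i\<in>S. c i = 0))"

definition rk :: "'a::field set \<Rightarrow> nat \<Rightarrow> (nat \<Rightarrow> 'a) \<Rightarrow> nat" where
  "rk K n x = Max {card S | S. S \<subseteq> {0..<n} \<and> lin_indep_over K x S}"

definition d_R :: "'a::field set \<Rightarrow> nat \<Rightarrow> (nat \<Rightarrow> 'a) \<Rightarrow> (nat \<Rightarrow> 'a) \<Rightarrow> nat" where
  "d_R K n x y = rk K n (\<lambda>i. x i - y i)"

definition covering_radius :: "'a::field set \<Rightarrow> nat \<Rightarrow> (nat \<Rightarrow> 'a) set \<Rightarrow> nat" where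
  "covering_radius K n C = Max ((\<lambda>x. Min ((\<lambda>c. d_R K n x c) ` C)) ` vecs n)"

text \<open>Minimum cardinality of a (nonempty) code in GF(q^m)^n with rank covering radius rho
  (read as: covering radius at most rho, the standard covering-code convention).\<close>
definition K_R :: "'a::{field,finite} set \<Rightarrow> nat \<Rightarrow> nat \<Rightarrow> nat" where
  "K_R K n \<rho> = Min {card C | C. C \<subseteq> vecs n \<and> C \<noteq> {} \<and> covering_radius K n C \<le> \<rho>}"

definition alpha :: "nat \<Rightarrow> nat \<Rightarrow> nat \<Rightarrow> real" where
  "alpha q m u = (\<Prod>i<u. (real q ^ m - real q ^ i))"

definition gauss_binom :: "nat \<Rightarrow> nat \<Rightarrow> nat \<Rightarrow> real" where
  "gauss_binom q n u = alpha q n u / alpha q u u"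

definition V :: "nat \<Rightarrow> nat \<Rightarrow> nat \<Rightarrow> nat \<Rightarrow> real" where
  "V q m n \<rho> = (\<Sum>u=0..\<rho>. gauss_binom q n u * alpha q m u)"

end

theory Submission
  imports Defs "HOL-Analysis.Analysis"
begin

definition spn :: "'a::field set \<Rightarrow> (nat \<Rightarrow> 'a) \<Rightarrow> nat set \<Rightarrow> 'a set" where
  "spn K x S = {y. \<exists>c. (\<forall>i\<in>S. c i \<in> K) \<and> y = (\<Sum>i\<in>S. c i * x i)}"

locale rkctx =
  fixes K :: "'a::{field,finite} set"
  assumes sub: "is_subfield K"
begin

lemma K0: "0 \<in> K" and K1: "1 \<in> K" and Kadd: "a \<in> K \<Longrightarrow> b \<in> K \<Longrightarrow> a + b \<in> K"
  and Kmul: "a \<in> K \<Longrightarrow> b \<in> K \<Longrightarrow> a * b \<in> K" and Kneg: "a \<in> K \<Longrightarrow> - a \<in> K"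
  and Kinv: "a \<in> K \<Longrightarrow> inverse a \<in> K"
  using sub unfolding is_subfield_def by (auto simp del: inverse_nonzero_iff_nonzero)

lemma Kdiff: "a \<in> K \<Longrightarrow> b \<in> K \<Longrightarrow> a - b \<in> K"
  using Kadd Kneg by (metis diff_conv_add_uminus)

lemma Kdiv: "a \<in> K \<Longrightarrow> b \<in> K \<Longrightarrow> a / b \<in> K"
  using Kmul Kinv by (metis divide_inverse)

lemma finK: "finite K" by simp

lemma card_K: "card K \<ge> 2"
proof -
  have "{0,1} \<subseteq> K" using K0 K1 by auto
  then have "card {0::'a,1} \<le> card K" by (intro card_mono) auto
  then show ?thesis by simp
qed

lemma spn_zero: "0 \<in> spn K x S"
  unfolding spn_def by (rule CollectI, rule exI[of _ "\<lambda>_. 0"]) (auto simp: K0)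

lemma spn_add: "a \<in> spn K x S \<Longrightarrow> b \<in> spn K x S \<Longrightarrow> a + b \<in> spn K x S"
  unfolding spn_def
proof (clarsimp)
  fix c d assume "\<forall>i\<in>S. c i \<in> K" "\<forall>i\<in>S. d i \<in> K"
  then show "\<exists>e. (\<forall>i\<in>S. e i \<in> K) \<and> (\<Sum>i\<in>S. c i * x i) + (\<Sum>i\<in>S. d i * x i) = (\<Sum>i\<in>S. e i * x i)"
    by (intro exI[of _ "\<lambda>i. c i + d i"]) (auto simp: Kadd sum.distrib distrib_right)
qed

lemma spn_smult: "k \<in> K \<Longrightarrow> a \<in> spn K x S \<Longrightarrow> k * a \<in> spn K x S"
  unfolding spn_def
proof (clarsimp)
  fix c assume "k \<in> K" "\<forall>i\<in>S. c i \<in> K"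
  then show "\<exists>e. (\<forall>i\<in>S. e i \<in> K) \<and> k * (\<Sum>i\<in>S. c i * x i) = (\<Sum>i\<in>S. e i * x i)"
    by (intro exI[of _ "\<lambda>i. k * c i"]) (auto simp: Kmul sum_distrib_left mult.assoc)
qed

lemma spn_sum: "finite A \<Longrightarrow> (\<forall>j\<in>A. f j \<in> spn K x S) \<Longrightarrow> sum f A \<in> spn K x S"
  by (induction A rule: finite_induct) (auto simp: spn_zero spn_add)

lemma spn_gen: "finite S \<Longrightarrow> j \<in> S \<Longrightarrow> x j \<in> spn K x S"
proof -
  assume fS: "finite S" and jS: "j \<in> S"
  have "(\<Sum>i\<in>S. (if i = j then 1 else 0) * x i) = (\<Sum>i\<in>S. if i = j then x i else 0)"
    by (rule sum.cong) auto
  also have "\<dots> = x j" using fS jS by simp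
  finally have e: "x j = (\<Sum>i\<in>S. (if i = j then 1 else 0) * x i)" by simp
  have Kc: "\<forall>i\<in>S. (if i = j then 1 else 0) \<in> K" by (auto simp: K0 K1)
  have "\<exists>c. (\<forall>i\<in>S. c i \<in> K) \<and> x j = (\<Sum>i\<in>S. c i * x i)"
    using e Kc by (intro exI[of _ "\<lambda>i. if i = j then 1 else 0"] conjI)
  then show ?thesis unfolding spn_def by simp
qed

lemma spn_mono: "finite T \<Longrightarrow> S \<subseteq> T \<Longrightarrow> spn K x S \<subseteq> spn K x T"
proof
  fix y assume fT: "finite T" and ST: "S \<subseteq> T" and "y \<in> spn K x S"
  then obtain c where c: "\<forall>i\<in>S. c i \<in> K" "y = (\<Sum>i\<in>S. c i * x i)" unfolding spn_def by auto
  define d where "d i = (if i \<in> S then c i else 0)" for i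
  have "(\<Sum>i\<in>T. d i * x i) = (\<Sum>i\<in>S. d i * x i)"
    using fT ST by (intro sum.mono_neutral_right) (auto simp: d_def)
  also have "\<dots> = y" using c by (simp add: d_def)
  finally show "y \<in> spn K x T" unfolding spn_def using c K0 by (auto simp: d_def intro!: exI[of _ d])
qed

lemma spn_sub: "finite T \<Longrightarrow> (\<forall>j\<in>T. x j \<in> spn K x S) \<Longrightarrow> spn K x T \<subseteq> spn K x S"
proof
  fix y assume fT: "finite T" and h: "\<forall>j\<in>T. x j \<in> spn K x S" and "y \<in> spn K x T"
  then obtain c where c: "\<forall>i\<in>T. c i \<in> K" "y = (\<Sum>i\<in>T. c i * x i)" unfolding spn_def by auto
  show "y \<in> spn K x S" unfolding c(2) using fT h c(1) by (intro spn_sum) (auto intro: spn_smult)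
qed

lemma spn_cong: "(\<forall>i\<in>S. x i = y i) \<Longrightarrow> spn K x S = spn K y S"
  unfolding spn_def by (metis (no_types, lifting) sum.cong)

lemma spn_image: "spn K x S = (\<lambda>c. \<Sum>i\<in>S. c i * x i) ` (PiE S (\<lambda>_. K))"
proof
  show "spn K x S \<subseteq> (\<lambda>c. \<Sum>i\<in>S. c i * x i) ` (PiE S (\<lambda>_. K))"
  proof
    fix y assume "y \<in> spn K x S"
    then obtain c where c: "\<forall>i\<in>S. c i \<in> K" "y = (\<Sum>i\<in>S. c i * x i)" unfolding spn_def by auto
    have "restrict c S \<in> PiE S (\<lambda>_. K)" using c by auto
    moreover have "y = (\<Sum>i\<in>S. restrict c S i * x i)" using c by simp
    ultimately show "y \<in> (\<lambda>c. \<Sum>i\<in>S. c i * x i) ` (PiE S (\<lambda>_. K))" by blast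
  qed
  show "(\<lambda>c. \<Sum>i\<in>S. c i * x i) ` (PiE S (\<lambda>_. K)) \<subseteq> spn K x S"
    unfolding spn_def by (auto simp: PiE_iff)
qed

lemma card_spn_le: "finite S \<Longrightarrow> card (spn K x S) \<le> card K ^ card S"
proof -
  assume "finite S"
  have "card (spn K x S) \<le> card (PiE S (\<lambda>_. K))" unfolding spn_image by (rule card_image_le) (simp add: \<open>finite S\<close> finite_PiE)
  also have "\<dots> = card K ^ card S" using \<open>finite S\<close> by (simp add: card_PiE)
  finally show ?thesis .
qed

lemma card_spn_indep: "finite S \<Longrightarrow> lin_indep_over K x S \<Longrightarrow> card (spn K x S) = card K ^ card S"
proof -
  assume fS: "finite S" and ind: "lin_indep_over K x S"
  have "inj_on (\<lambda>c. \<Sum>i\<in>S. c i * x i) (PiE S (\<lambda>_. K))"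
  proof (rule inj_onI)
    fix c d assume c: "c \<in> PiE S (\<lambda>_. K)" and d: "d \<in> PiE S (\<lambda>_. K)"
      and eq: "(\<Sum>i\<in>S. c i * x i) = (\<Sum>i\<in>S. d i * x i)"
    have "(\<Sum>i\<in>S. (c i - d i) * x i) = 0" using eq by (simp add: left_diff_distrib sum_subtractf)
    moreover have "\<forall>i\<in>S. c i - d i \<in> K" using c d by (auto intro: Kdiff)
    ultimately have "\<forall>i\<in>S. c i - d i = 0" using ind[unfolded lin_indep_over_def, rule_format, of "\<lambda>i. c i - d i"] by blast
    then show "c = d" using c d by (intro PiE_ext) auto
  qed
  then have "card (spn K x S) = card (PiE S (\<lambda>_. K))" unfolding spn_image by (rule card_image)
  also have "\<dots> = card K ^ card S" using fS by (simp add: card_PiE)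
  finally show ?thesis .
qed

lemma indep_insert:
  assumes fS: "finite S" and ind: "lin_indep_over K x S" and nj: "x j \<notin> spn K x S"
  shows "lin_indep_over K x (insert j S)" "j \<notin> S"
proof -
  show jS: "j \<notin> S" using nj spn_gen fS by blast
  show "lin_indep_over K x (insert j S)" unfolding lin_indep_over_def
  proof (intro allI impI)
    fix c assume cK: "\<forall>i\<in>insert j S. c i \<in> K" and s: "(\<Sum>i\<in>insert j S. c i * x i) = 0"
    have s2: "c j * x j + (\<Sum>i\<in>S. c i * x i) = 0" using s fS jS by simp
    have cj: "c j = 0"
    proof (rule ccontr)
      assume cj: "c j \<noteq> 0"
      have "x j = (\<Sum>i\<in>S. (- c i / c j) * x i)"
      proof -
        have "c j * x j = - (\<Sum>i\<in>S. c i * x i)" using s2 by (simp add: eq_neg_iff_add_eq_0)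
        moreover have "x j = (c j * x j) / c j" using cj by simp
        ultimately have e1: "x j = - (\<Sum>i\<in>S. c i * x i) / c j" by simp
        have "\<dots> = (\<Sum>i\<in>S. (- c i / c j) * x i)" by (simp add: sum_divide_distrib sum_negf)
        with e1 show ?thesis by simp
      qed
      moreover have "\<forall>i\<in>S. - c i / c j \<in> K" using cK by (auto intro: Kdiv Kneg)
      ultimately have "x j \<in> spn K x S" unfolding spn_def by (intro CollectI exI[of _ "\<lambda>i. - c i / c j"]) auto
      then show False using nj by simp
    qed
    then have "(\<Sum>i\<in>S. c i * x i) = 0" using s2 by simp
    then have "\<forall>i\<in>S. c i = 0" using ind cK unfolding lin_indep_over_def by auto
    then show "\<forall>i\<in>insert j S. c i = 0" using cj by auto
  qed
qed

lemma indep_subset: "lin_indep_over K x S \<Longrightarrow> finite S \<Longrightarrow> T \<subseteq> S \<Longrightarrow> lin_indep_over K x T"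
  unfolding lin_indep_over_def
proof (intro allI impI)
  fix c assume ind: "\<forall>c. (\<forall>i\<in>S. c i \<in> K) \<longrightarrow> (\<Sum>i\<in>S. c i * x i) = 0 \<longrightarrow> (\<forall>i\<in>S. c i = 0)"
    and fS: "finite S" and TS: "T \<subseteq> S" and cK: "\<forall>i\<in>T. c i \<in> K" and s: "(\<Sum>i\<in>T. c i * x i) = 0"
  define d where "d i = (if i \<in> T then c i else 0)" for i
  have "(\<Sum>i\<in>S. d i * x i) = (\<Sum>i\<in>T. d i * x i)"
    using fS TS by (intro sum.mono_neutral_right) (auto simp: d_def)
  also have "\<dots> = 0" using s by (simp add: d_def)
  finally have s0: "(\<Sum>i\<in>S. d i * x i) = 0" .
  have dK: "\<forall>i\<in>S. d i \<in> K" using cK K0 by (auto simp: d_def)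
  have "\<forall>i\<in>S. d i = 0" using ind[rule_format, of d] s0 dK by blast
  then show "\<forall>i\<in>T. c i = 0" using TS by (auto simp: d_def split: if_splits)
qed

lemma indep_empty: "lin_indep_over K x {}" unfolding lin_indep_over_def by simp

lemma rk_set_fin: "finite {card S |S. S \<subseteq> {0..<n} \<and> lin_indep_over K x S}"
proof -
  have "{card S |S. S \<subseteq> {0..<n} \<and> lin_indep_over K x S} \<subseteq> card ` Pow {0..<n}" by blast
  then show ?thesis by (rule finite_subset) simp
qed

lemma rk_ge: "S \<subseteq> {0..<n} \<Longrightarrow> lin_indep_over K x S \<Longrightarrow> card S \<le> rk K n x"
proof -
  assume a: "S \<subseteq> {0..<n}" "lin_indep_over K x S"
  have "card S \<in> {card S |S. S \<subseteq> {0..<n} \<and> lin_indep_over K x S}"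
    using a by (intro CollectI exI[of _ S] conjI refl)
  then show ?thesis unfolding rk_def by (rule Max_ge[OF rk_set_fin])
qed

lemma rk_witness: "\<exists>S. S \<subseteq> {0..<n} \<and> lin_indep_over K x S \<and> card S = rk K n x"
proof -
  have "0 \<in> {card S |S. S \<subseteq> {0..<n} \<and> lin_indep_over K x S}"
    using indep_empty by (intro CollectI exI[of _ "{}"] conjI) auto
  then have "{card S |S. S \<subseteq> {0..<n} \<and> lin_indep_over K x S} \<noteq> {}" by (intro notI) simp
  then have "rk K n x \<in> {card S |S. S \<subseteq> {0..<n} \<and> lin_indep_over K x S}"
    unfolding rk_def by (rule Max_in[OF rk_set_fin])
  then obtain S where "rk K n x = card S" "S \<subseteq> {0..<n}" "lin_indep_over K x S" by (auto simp only: mem_Collect_eq)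
  then show ?thesis by (intro exI[of _ S] conjI) auto
qed

lemma rk_span:
  "\<exists>S. S \<subseteq> {0..<n} \<and> lin_indep_over K x S \<and> card S = rk K n x \<and> spn K x {0..<n} = spn K x S"
proof -
  obtain S where S: "S \<subseteq> {0..<n}" "lin_indep_over K x S" "card S = rk K n x" using rk_witness by blast
  have fS: "finite S" using S(1) finite_subset by blast
  have "\<forall>j\<in>{0..<n}. x j \<in> spn K x S"
  proof (rule ccontr)
    assume "\<not> ?thesis"
    then obtain j where j: "j < n" "x j \<notin> spn K x S" by auto
    have "lin_indep_over K x (insert j S)" "j \<notin> S" using indep_insert[OF fS S(2) j(2)] by auto
    then have "card (insert j S) \<le> rk K n x" using j S(1) by (intro rk_ge) auto
    then show False using \<open>j \<notin> S\<close> fS S(3) by simp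
  qed
  then have "spn K x {0..<n} \<subseteq> spn K x S" by (intro spn_sub) auto
  moreover have "spn K x S \<subseteq> spn K x {0..<n}" using S(1) by (intro spn_mono) auto
  ultimately have "spn K x {0..<n} = spn K x S" by (rule antisym)
  with S show ?thesis by (intro exI[of _ S] conjI)
qed

lemma card_spn_rk: "card (spn K x {0..<n}) = card K ^ rk K n x"
proof -
  obtain S where S: "S \<subseteq> {0..<n}" "lin_indep_over K x S" "card S = rk K n x" "spn K x {0..<n} = spn K x S"
    using rk_span by blast
  have "finite S" using S(1) finite_subset by blast
  then have c: "card (spn K x S) = card K ^ card S" using S(2) by (rule card_spn_indep)
  have "card (spn K x {0..<n}) = card (spn K x S)" by (simp only: S(4))
  also have "\<dots> = card K ^ card S" by (fact c)
  also have "\<dots> = card K ^ rk K n x" by (simp only: S(3))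
  finally show ?thesis .
qed

end

lemma alpha_0[simp]: "alpha q k 0 = 1" by (simp add: alpha_def)

lemma alpha_Suc: "alpha q k (Suc v) = alpha q k v * (real q ^ k - real q ^ v)"
  by (simp add: alpha_def)

lemma alpha_SucSuc: "alpha q (Suc k) (Suc v) = (real q ^ Suc k - 1) * real q ^ v * alpha q k v"
proof -
  have "alpha q (Suc k) (Suc v) = (real q ^ Suc k - 1) * (\<Prod>i<v. real q ^ Suc k - real q ^ Suc i)"
    unfolding alpha_def by (subst prod.lessThan_Suc_shift) simp
  also have "(\<Prod>i<v. real q ^ Suc k - real q ^ Suc i) = (\<Prod>i<v. real q * (real q ^ k - real q ^ i))"
    by (simp add: right_diff_distrib)
  also have "\<dots> = real q ^ v * alpha q k v" by (simp add: prod.distrib alpha_def)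
  finally show ?thesis by simp
qed

lemma alpha_0_Suc: "alpha q 0 (Suc v) = 0"
  unfolding alpha_def by (subst prod.lessThan_Suc_shift) simp

lemma alpha_pos: "q \<ge> 2 \<Longrightarrow> alpha q v v > 0"
  unfolding alpha_def
proof (intro prod_pos ballI)
  fix i assume "q \<ge> 2" "i \<in> {..<v}"
  then have "real q ^ i < real q ^ v" by (intro power_strict_increasing) auto
  then show "0 < real q ^ v - real q ^ i" by simp
qed

lemma gauss_0[simp]: "gauss_binom q n 0 = 1" by (simp add: gauss_binom_def)

lemma gauss_0_Suc: "gauss_binom q 0 (Suc v) = 0" by (simp add: gauss_binom_def alpha_0_Suc)

lemma qpascal:
  assumes q: "q \<ge> 2"
  shows "gauss_binom q (Suc n) (Suc v) = real q ^ Suc v * gauss_binom q n (Suc v) + gauss_binom q n v"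
proof -
  define A where "A = alpha q v v"
  have A: "A > 0" using alpha_pos[OF q] by (simp add: A_def)
  have "real q ^ Suc v > 1" by (rule one_less_power) (use q in auto)
  then have q1: "real q ^ Suc v - 1 > 0" by simp
  have qv: "real q ^ v > 0" using q by simp
  have B: "alpha q (Suc v) (Suc v) = (real q ^ Suc v - 1) * real q ^ v * A"
    by (simp add: alpha_SucSuc A_def)
  show ?thesis
    unfolding gauss_binom_def alpha_SucSuc[of q n] alpha_Suc[of q n v] B A_def[symmetric]
    using A q1 qv by (simp add: field_simps)
qed

context rkctx begin

lemma rk_cong: "(\<forall>i<n. x i = y i) \<Longrightarrow> rk K n x = rk K n y"
proof -
  assume h: "\<forall>i<n. x i = y i"
  have "\<forall>S\<subseteq>{0..<n}. lin_indep_over K x S = lin_indep_over K y S"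
  proof (intro allI impI)
    fix S assume "S \<subseteq> {0..<n}"
    then have "\<forall>c. (\<Sum>i\<in>S. c i * x i) = (\<Sum>i\<in>S. c i * y i)" using h by (auto intro!: sum.cong)
    then show "lin_indep_over K x S = lin_indep_over K y S" unfolding lin_indep_over_def by simp
  qed
  then have "{card S |S. S \<subseteq> {0..<n} \<and> lin_indep_over K x S} = {card S |S. S \<subseteq> {0..<n} \<and> lin_indep_over K y S}"
    by blast
  then show ?thesis unfolding rk_def by simp
qed

lemma rk_le_Suc: "rk K (Suc n) x \<le> Suc (rk K n x)"
proof -
  obtain S where S: "S \<subseteq> {0..<Suc n}" "lin_indep_over K x S" "card S = rk K (Suc n) x"
    using rk_witness by blast
  have fS: "finite S" using S(1) finite_subset by blast
  have "lin_indep_over K x (S - {n})" using indep_subset[OF S(2) fS] by blast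
  moreover have "S - {n} \<subseteq> {0..<n}" using S(1) by auto
  ultimately have "card (S - {n}) \<le> rk K n x" by (rule rk_ge[rotated])
  moreover have "card S \<le> Suc (card (S - {n}))"
  proof -
    have "card S \<le> card (insert n (S - {n}))" by (rule card_mono) (use fS in auto)
    also have "\<dots> = Suc (card (S - {n}))" by (rule card_insert_disjoint) (use fS in auto)
    finally show ?thesis .
  qed
  ultimately show ?thesis using S(3) by simp
qed

lemma rk_mono_Suc: "rk K n x \<le> rk K (Suc n) x"
proof -
  obtain S where S: "S \<subseteq> {0..<n}" "lin_indep_over K x S" "card S = rk K n x"
    using rk_witness by blast
  have "S \<subseteq> {0..<Suc n}" using S(1) by auto
  then show ?thesis using rk_ge[OF _ S(2)] S(3) by metis
qed

lemma rk_0: "rk K 0 x = 0"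
  using rk_witness[of 0 x] by auto

lemma rk_Suc_in: "x n \<in> spn K x {0..<n} \<Longrightarrow> rk K (Suc n) x = rk K n x"
proof -
  assume h: "x n \<in> spn K x {0..<n}"
  have "\<forall>j\<in>{0..<Suc n}. x j \<in> spn K x {0..<n}"
    using h spn_gen[of "{0..<n}"] by (auto simp: less_Suc_eq)
  then have "spn K x {0..<Suc n} \<subseteq> spn K x {0..<n}" by (intro spn_sub) auto
  then have "card (spn K x {0..<Suc n}) \<le> card (spn K x {0..<n})" by (intro card_mono) auto
  then have "card K ^ rk K (Suc n) x \<le> card K ^ rk K n x" by (simp add: card_spn_rk)
  then have "rk K (Suc n) x \<le> rk K n x" using card_K by (intro power_le_imp_le_exp) auto
  then show ?thesis using rk_mono_Suc[of n x] by simp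
qed

lemma rk_Suc_out: "x n \<notin> spn K x {0..<n} \<Longrightarrow> rk K (Suc n) x = Suc (rk K n x)"
proof -
  assume h: "x n \<notin> spn K x {0..<n}"
  obtain S where S: "S \<subseteq> {0..<n}" "lin_indep_over K x S" "card S = rk K n x" "spn K x {0..<n} = spn K x S"
    using rk_span by blast
  have fS: "finite S" using S(1) finite_subset by blast
  have "lin_indep_over K x (insert n S)" "n \<notin> S" using indep_insert[OF fS S(2)] h S(4) by auto
  then have "card (insert n S) \<le> rk K (Suc n) x" using S(1) by (intro rk_ge) auto
  then have "Suc (rk K n x) \<le> rk K (Suc n) x" using fS \<open>n \<notin> S\<close> S(3) by simp
  then show ?thesis using rk_le_Suc[of n x] by simp
qed

lemma rk_upd: "y \<in> vecs n \<Longrightarrow> rk K (Suc n) (y(n := a)) =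
   (if a \<in> spn K y {0..<n} then rk K n y else Suc (rk K n y))"
proof -
  have e1: "rk K n (y(n := a)) = rk K n y" by (rule rk_cong) auto
  have e2: "spn K (y(n := a)) {0..<n} = spn K y {0..<n}" by (rule spn_cong) auto
  show ?thesis
    using rk_Suc_in[of "y(n := a)" n] rk_Suc_out[of "y(n := a)" n] e1 e2 by auto
qed

end

lemma vecs_0: "vecs 0 = {\<lambda>_. 0}" unfolding vecs_def by auto

lemma vecs_Suc: "vecs (Suc n) = (\<lambda>(y, a). y(n := a)) ` (vecs n \<times> UNIV)"
proof
  show "vecs (Suc n) \<subseteq> (\<lambda>(y, a). y(n := a)) ` (vecs n \<times> UNIV)"
  proof
    fix x assume x: "x \<in> vecs (Suc n)"
    have "x = (\<lambda>(y, a). y(n := a)) (x(n := 0), x n)" by auto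
    moreover have "x(n := 0) \<in> vecs n" using x unfolding vecs_def by auto
    ultimately show "x \<in> (\<lambda>(y, a). y(n := a)) ` (vecs n \<times> UNIV)" by blast
  qed
  show "(\<lambda>(y, a). y(n := a)) ` (vecs n \<times> UNIV) \<subseteq> vecs (Suc n)"
    unfolding vecs_def by auto
qed

lemma finite_vecs: "finite (vecs n :: (nat \<Rightarrow> 'a::{finite,zero}) set)"
  by (induction n) (auto simp: vecs_0 vecs_Suc)

lemma card_filter_vecs_Suc:
  fixes P :: "(nat \<Rightarrow> 'a::{finite,zero}) \<Rightarrow> bool"
  shows "card {x \<in> vecs (Suc n). P x} = (\<Sum>y\<in>vecs n. card {a. P (y(n := a))})"
proof -
  have "{x \<in> vecs (Suc n). P x} = (\<lambda>(y, a). y(n := a)) ` (SIGMA y:vecs n. {a. P (y(n := a))})"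
    unfolding vecs_Suc by auto
  moreover have "inj_on (\<lambda>(y, a). y(n := a)) (SIGMA y:vecs n. {a. P (y(n := a))})"
  proof (rule inj_onI, clarsimp)
    fix y a z b assume y: "y \<in> vecs n" and z: "z \<in> vecs n" and e: "y(n := a) = z(n := b)"
    have "a = b" using fun_cong[OF e, of n] by simp
    moreover have "y = z"
    proof
      fix i show "y i = z i"
        using fun_cong[OF e, of i] y z unfolding vecs_def by (cases "i = n") auto
    qed
    ultimately show "y = z \<and> a = b" by simp
  qed
  ultimately have "card {x \<in> vecs (Suc n). P x} = card (SIGMA y:vecs n. {a. P (y(n := a))})"
    by (simp add: card_image)
  also have "\<dots> = (\<Sum>y\<in>vecs n. card {a. P (y(n := a))})"
    by (rule card_SigmaI) (auto simp: finite_vecs)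
  finally show ?thesis .
qed

lemma card_vecs: "card (vecs n :: (nat \<Rightarrow> 'a::{finite,zero}) set) = card (UNIV :: 'a set) ^ n"
proof (induction n)
  case 0 then show ?case by (simp add: vecs_0)
next
  case (Suc n)
  have "card (vecs (Suc n) :: (nat \<Rightarrow> 'a) set) = card {x \<in> (vecs (Suc n) :: (nat \<Rightarrow> 'a) set). True}" by simp
  also have "\<dots> = (\<Sum>y\<in>(vecs n :: (nat \<Rightarrow> 'a) set). card (UNIV :: 'a set))" by (subst card_filter_vecs_Suc) simp
  also have "\<dots> = card (UNIV :: 'a set) ^ Suc n" using Suc by simp
  finally show ?case .
qed

lemma sum_if_const: "finite A \<Longrightarrow> (\<Sum>y\<in>A. if P y then (c::real) else 0) = c * real (card {y\<in>A. P y})"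
  by (simp add: sum.inter_filter[symmetric])

definition cnt :: "'a::field set \<Rightarrow> nat \<Rightarrow> nat \<Rightarrow> nat" where
  "cnt K n u = card {x \<in> vecs n. rk K n x = u}"

context rkctx begin

lemma fiber_card: 
  assumes y: "y \<in> vecs n"
  shows "real (card {a. rk K (Suc n) (y(n := a)) = u}) =
    (if rk K n y = u then real (card K) ^ u else 0) +
    (if Suc (rk K n y) = u then real (card (UNIV :: 'a set)) - real (card K) ^ rk K n y else 0)"
proof -
  define Sp where "Sp = spn K y {0..<n}"
  have cs: "card Sp = card K ^ rk K n y" unfolding Sp_def by (rule card_spn_rk)
  have e: "{a. rk K (Suc n) (y(n := a)) = u} =
    (if rk K n y = u then Sp else if Suc (rk K n y) = u then UNIV - Sp else {})"
    using rk_upd[OF y] unfolding Sp_def by auto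
  have "card (UNIV - Sp) = card (UNIV :: 'a set) - card Sp" by (rule card_Diff_subset) auto
  moreover have "card Sp \<le> card (UNIV :: 'a set)" by (rule card_mono) auto
  ultimately have "real (card (UNIV - Sp)) = real (card (UNIV :: 'a set)) - real (card K) ^ rk K n y"
    using cs by (simp add: of_nat_diff)
  then show ?thesis using e cs by auto
qed

lemma cnt_Suc_0: "cnt K (Suc n) 0 = cnt K n 0"
proof -
  have "real (cnt K (Suc n) 0) = (\<Sum>y\<in>vecs n. real (card {a. rk K (Suc n) (y(n := a)) = 0}))"
    unfolding cnt_def by (subst card_filter_vecs_Suc) simp
  also have "\<dots> = (\<Sum>y\<in>vecs n. if rk K n y = 0 then 1 else 0)"
    by (rule sum.cong) (auto simp: fiber_card)
  also have "\<dots> = real (cnt K n 0)" by (simp add: sum_if_const finite_vecs cnt_def)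
  finally show ?thesis by simp
qed

lemma cnt_Suc_Suc: "real (cnt K (Suc n) (Suc v)) =
   real (card K) ^ Suc v * real (cnt K n (Suc v)) + (real (card (UNIV :: 'a set)) - real (card K) ^ v) * real (cnt K n v)"
proof -
  have "real (cnt K (Suc n) (Suc v)) = (\<Sum>y\<in>vecs n. real (card {a. rk K (Suc n) (y(n := a)) = Suc v}))"
    unfolding cnt_def by (subst card_filter_vecs_Suc) simp
  also have "\<dots> = (\<Sum>y\<in>vecs n. (if rk K n y = Suc v then real (card K) ^ Suc v else 0) +
      (if rk K n y = v then real (card (UNIV :: 'a set)) - real (card K) ^ v else 0))"
    by (rule sum.cong) (auto simp: fiber_card)
  also have "\<dots> = real (card K) ^ Suc v * real (cnt K n (Suc v)) + (real (card (UNIV :: 'a set)) - real (card K) ^ v) * real (cnt K n v)"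
    by (simp add: sum.distrib sum_if_const finite_vecs cnt_def)
  finally show ?thesis .
qed

lemma cnt_formula:
  assumes q: "card K = q" and m: "card (UNIV :: 'a set) = q ^ m"
  shows "real (cnt K n u) = gauss_binom q n u * alpha q m u"
proof (induction n arbitrary: u)
  case 0
  have "{x \<in> vecs 0. rk K 0 x = u} = (if u = 0 then {\<lambda>_. 0} else {})"
    by (simp add: vecs_0 rk_0)
  then have "cnt K 0 u = (if u = 0 then 1 else 0)" unfolding cnt_def by (simp only:) simp
  then show ?case by (cases u) (simp_all add: gauss_0_Suc)
next
  case (Suc n)
  have q2: "q \<ge> 2" using card_K q by simp
  show ?case
  proof (cases u)
    case 0 then show ?thesis using Suc cnt_Suc_0 by simp
  next
    case (Suc v)
    have "real (cnt K (Suc n) u) = real q ^ Suc v * (gauss_binom q n (Suc v) * alpha q m (Suc v))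
       + (real q ^ m - real q ^ v) * (gauss_binom q n v * alpha q m v)"
      using cnt_Suc_Suc[of n v] Suc.IH q m Suc by simp
    also have "\<dots> = gauss_binom q (Suc n) u * alpha q m u"
      unfolding Suc qpascal[OF q2] alpha_Suc[of q m v] by (simp add: algebra_simps)
    finally show ?thesis .
  qed
qed

lemma ball_card:
  "card {x \<in> vecs n. rk K n x \<le> r} = (\<Sum>u\<le>r. cnt K n u)"
proof (induction r)
  case 0 then show ?case by (simp add: cnt_def)
next
  case (Suc r)
  have "{x \<in> vecs n. rk K n x \<le> Suc r} = {x \<in> vecs n. rk K n x \<le> r} \<union> {x \<in> vecs n. rk K n x = Suc r}"
    by auto
  then have "card {x \<in> vecs n. rk K n x \<le> Suc r} = card {x \<in> vecs n. rk K n x \<le> r} + card {x \<in> vecs n. rk K n x = Suc r}"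
    by (simp add: card_Un_disjoint finite_vecs, subst card_Un_disjoint) (auto simp: finite_vecs)
  then show ?case using Suc by (simp add: cnt_def)
qed

lemma V_eq:
  assumes q: "card K = q" and m: "card (UNIV :: 'a set) = q ^ m"
  shows "V q m n r = real (card {x \<in> vecs n. rk K n x \<le> r})"
  unfolding ball_card V_def using cnt_formula[OF q m] by (simp add: atMost_atLeast0)

end

lemma final_ineq:
  fixes N W :: real
  assumes W1: "1 \<le> W" and WN: "W \<le> N"
  shows "\<exists>s::nat. real s + N * (1 - W / N) ^ s \<le> N / W * (1 + ln W)"
proof -
  define p where "p = W / N"
  have Npos: "N > 0" using W1 WN by simp
  have p0: "p > 0" and p1: "p \<le> 1" using W1 WN Npos by (auto simp: p_def)
  have Np: "N / W = 1 / p" using Npos W1 by (simp add: p_def)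
  define t where "t = ln W / p"
  have t0: "t \<ge> 0" using W1 p0 by (simp add: t_def)
  define s where "s = nat \<lceil>t\<rceil>"
  define \<delta> where "\<delta> = real s - t"
  have d0: "\<delta> \<ge> 0" and d1: "\<delta> < 1" using t0 by (auto simp: \<delta>_def s_def) linarith
  show ?thesis
  proof (cases "p = 1")
    case True
    then have NW: "N = W" using Npos by (simp add: p_def)
    show ?thesis
    proof (cases "s = 0")
      case True
      then have "t \<le> 0" by (simp add: s_def)
      then have "ln W \<le> 0" using p0 by (simp add: t_def divide_le_0_iff)
      then have "W = 1" using W1 by (smt (verit) ln_ge_zero_imp_ge_one ln_le_zero_iff)
      then show ?thesis using NW by (intro exI[of _ 0]) simp
    next
      case False
      have "real s \<le> t + 1" using d1 by (simp add: \<delta>_def)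
      then show ?thesis using False NW \<open>p = 1\<close> W1
        by (intro exI[of _ s]) (simp add: p_def[symmetric] t_def power_0_left)
    qed
  next
    case False
    then have p1': "p < 1" using p1 by simp
    define r where "r = 1 - p"
    have r0: "r > 0" and r1: "r < 1" using p0 p1' by (auto simp: r_def)
    have "r ^ s = r powr (real s)" using r0 by (simp add: powr_realpow)
    also have "\<dots> = r powr t * r powr \<delta>" by (simp add: \<delta>_def flip: powr_add)
    finally have rs: "r ^ s = r powr t * r powr \<delta>" .
    have "r powr t = exp (t * ln r)" using r0 by (simp add: powr_def)
    also have "\<dots> \<le> exp (t * (- p))"
    proof -
      have "ln r \<le> r - 1" using r0 by (rule ln_le_minus_one)
      then have "ln r \<le> - p" by (simp add: r_def)
      then show ?thesis using t0 by (intro exp_mono mult_left_mono) auto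
    qed
    also have "\<dots> = 1 / W" using p0 W1 by (simp add: t_def exp_minus inverse_eq_divide)
    finally have A: "r powr t \<le> 1 / W" .
    have "r powr \<delta> * 1 powr (1 - \<delta>) \<le> \<delta> * r + (1 - \<delta>) * 1"
      using d0 d1 r0 by (intro Youngs_inequality_0) auto
    then have B: "r powr \<delta> \<le> 1 - \<delta> * p" by (simp add: r_def algebra_simps)
    have B0: "r powr \<delta> \<ge> 0" by simp
    have "N * r ^ s \<le> N * ((1 / W) * (1 - \<delta> * p))"
      unfolding rs using A B B0 Npos W1 by (intro mult_left_mono mult_mono) auto
    also have "\<dots> = N / W - \<delta>" using Npos W1 by (simp add: p_def field_simps)
    finally have C: "N * r ^ s \<le> N / W - \<delta>" .
    have "real s + N * (1 - W / N) ^ s \<le> t + \<delta> + (N / W - \<delta>)"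
      using C by (simp add: \<delta>_def r_def p_def)
    also have "\<dots> = N / W * (1 + ln W)" using Np p0 by (simp add: t_def add_divide_distrib)
    finally show ?thesis by blast
  qed
qed

lemma card_filter_sum: "finite A \<Longrightarrow> card {y\<in>A. P y} = (\<Sum>y\<in>A. if P y then 1 else (0::nat))"
  by (simp add: sum.inter_filter[symmetric])

lemma avg_exists:
  fixes f :: "'b \<Rightarrow> nat"
  assumes "finite P" "P \<noteq> {}"
  shows "\<exists>\<sigma>\<in>P. f \<sigma> * card P \<le> sum f P"
proof (rule ccontr)
  assume "\<not> ?thesis"
  then have "\<forall>\<sigma>\<in>P. sum f P < f \<sigma> * card P" by (auto simp: not_le)
  then have "(\<Sum>\<sigma>\<in>P. sum f P) < (\<Sum>\<sigma>\<in>P. f \<sigma> * card P)"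
    using assms by (intro sum_strict_mono) auto
  moreover have "(\<Sum>\<sigma>\<in>P. f \<sigma> * card P) = sum f P * card P" by (simp add: sum_distrib_right)
  ultimately show False by simp
qed

context rkctx begin

lemma rk_zero: "rk K n (\<lambda>_. 0) = 0"
proof -
  obtain S where S: "S \<subseteq> {0..<n}" "lin_indep_over K (\<lambda>_. 0) S" "card S = rk K n (\<lambda>_. 0)"
    using rk_witness by blast
  have "\<forall>i\<in>S. (1::'a) = 0"
    using S(2) K1 unfolding lin_indep_over_def by (erule_tac x="\<lambda>_. 1" in allE) auto
  then have "S = {}" by auto
  then show ?thesis using S(3) by simp
qed

lemma zero_vecs: "(\<lambda>_. 0) \<in> vecs n" by (simp add: vecs_def)

lemma cov_card:
  assumes x: "x \<in> vecs n"
  shows "card {c \<in> vecs n. d_R K n x c \<le> r} = card {y \<in> vecs n. rk K n y \<le> r}"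
proof -
  define f where "f c = (\<lambda>i. x i - c i)" for c :: "nat \<Rightarrow> 'a"
  have inj: "inj_on f {c \<in> vecs n. d_R K n x c \<le> r}"
  proof (rule inj_onI)
    fix c c' assume "f c = f c'"
    then have "\<And>i. x i - c i = x i - c' i" unfolding f_def by metis
    then show "c = c'" by (intro ext) simp
  qed
  have "f ` {c \<in> vecs n. d_R K n x c \<le> r} = {y \<in> vecs n. rk K n y \<le> r}"
  proof (intro equalityI subsetI)
    fix y assume "y \<in> f ` {c \<in> vecs n. d_R K n x c \<le> r}"
    then obtain c where c: "c \<in> vecs n" "d_R K n x c \<le> r" "y = f c" by auto
    then show "y \<in> {y \<in> vecs n. rk K n y \<le> r}" using x by (auto simp: f_def vecs_def d_R_def)
  next
    fix y assume y: "y \<in> {y \<in> vecs n. rk K n y \<le> r}"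
    define c where "c = (\<lambda>i. x i - y i)"
    have "f c = y" by (simp add: f_def c_def)
    moreover have "c \<in> vecs n" using x y by (auto simp: c_def vecs_def)
    moreover have "d_R K n x c \<le> r" using y by (simp add: d_R_def c_def)
    ultimately show "y \<in> f ` {c \<in> vecs n. d_R K n x c \<le> r}" by blast
  qed
  then show ?thesis using card_image[OF inj] by simp
qed

lemma cover_bound:
  fixes s :: nat
  shows "\<exists>C. C \<subseteq> vecs n \<and> C \<noteq> {} \<and> covering_radius K n C \<le> r \<and>
     real (card C) \<le> real s + real (card (vecs n :: (nat \<Rightarrow> 'a) set)) *
        (1 - real (card {y \<in> vecs n. rk K n y \<le> r}) / real (card (vecs n :: (nat \<Rightarrow> 'a) set))) ^ s"
proof -
  define U where "U = (vecs n :: (nat \<Rightarrow> 'a) set)"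
  define N where "N = card U"
  define W where "W = card {y \<in> U. rk K n y \<le> r}"
  define Cov where "Cov x = {c \<in> U. d_R K n x c \<le> r}" for x
  define P where "P = PiE {..<s} (\<lambda>_. U)"
  define Unc where "Unc \<sigma> = {x \<in> U. \<forall>i<s. \<sigma> i \<notin> Cov x}" for \<sigma>
  have fU: "finite U" unfolding U_def by (rule finite_vecs)
  have U0: "(\<lambda>_. 0) \<in> U" unfolding U_def by (rule zero_vecs)
  have Npos: "N > 0" using fU U0 unfolding N_def by (auto simp: card_gt_0_iff)
  have CovU: "Cov x \<subseteq> U" for x unfolding Cov_def by auto
  have cardCov: "card (Cov x) = W" if "x \<in> U" for x
    using cov_card[of x n r] that unfolding Cov_def W_def U_def by simp
  have WN: "W \<le> N" unfolding W_def N_def by (rule card_mono[OF fU]) auto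
  have fP: "finite P" unfolding P_def using fU by (intro finite_PiE) auto
  have cP: "card P = N ^ s" unfolding P_def N_def by (simp add: card_PiE)
  have P0: "P \<noteq> {}" unfolding P_def using U0 by (auto simp: PiE_eq_empty_iff)
  have "(\<Sum>\<sigma>\<in>P. card (Unc \<sigma>)) = (\<Sum>\<sigma>\<in>P. \<Sum>x\<in>U. if \<forall>i<s. \<sigma> i \<notin> Cov x then 1 else 0)"
    unfolding Unc_def by (rule sum.cong[OF refl], rule card_filter_sum[OF fU])
  also have "\<dots> = (\<Sum>x\<in>U. \<Sum>\<sigma>\<in>P. if \<forall>i<s. \<sigma> i \<notin> Cov x then 1 else 0)"
    by (rule sum.swap)
  also have "\<dots> = (\<Sum>x\<in>U. card {\<sigma>\<in>P. \<forall>i<s. \<sigma> i \<notin> Cov x})"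
    by (rule sum.cong[OF refl], rule card_filter_sum[OF fP, symmetric])
  also have "\<dots> = (\<Sum>x\<in>U. (N - W) ^ s)"
  proof (rule sum.cong[OF refl])
    fix x assume x: "x \<in> U"
    have "{\<sigma>\<in>P. \<forall>i<s. \<sigma> i \<notin> Cov x} = PiE {..<s} (\<lambda>_. U - Cov x)"
      unfolding P_def by (rule set_eqI) (simp add: PiE_iff, blast)
    moreover have "card (U - Cov x) = N - W"
      using card_Diff_subset[OF finite_subset[OF CovU fU] CovU] cardCov[OF x] unfolding N_def by simp
    ultimately show "card {\<sigma>\<in>P. \<forall>i<s. \<sigma> i \<notin> Cov x} = (N - W) ^ s"
      by (simp add: card_PiE)
  qed
  also have "\<dots> = N * (N - W) ^ s" unfolding N_def by simp
  finally have sumeq: "(\<Sum>\<sigma>\<in>P. card (Unc \<sigma>)) = N * (N - W) ^ s" .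
  obtain \<sigma> where \<sigma>P: "\<sigma> \<in> P" and \<sigma>b: "card (Unc \<sigma>) * card P \<le> (\<Sum>\<sigma>\<in>P. card (Unc \<sigma>))"
    using avg_exists[OF fP P0, of "\<lambda>\<sigma>. card (Unc \<sigma>)"] by blast
  have bnd: "card (Unc \<sigma>) * N ^ s \<le> N * (N - W) ^ s" using \<sigma>b sumeq cP by simp
  define C where "C = \<sigma> ` {..<s} \<union> Unc \<sigma>"
  have \<sigma>U: "\<sigma> i \<in> U" if "i < s" for i using \<sigma>P that unfolding P_def by (auto simp: PiE_iff)
  have CU: "C \<subseteq> U" unfolding C_def Unc_def using \<sigma>U by auto
  have fC: "finite C" using CU fU finite_subset by blast
  have cC: "card C \<le> s + card (Unc \<sigma>)"
  proof -
    have "card C \<le> card (\<sigma> ` {..<s}) + card (Unc \<sigma>)" unfolding C_def by (rule card_Un_le)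
    moreover have "card (\<sigma> ` {..<s}) \<le> s" using card_image_le[of "{..<s}" \<sigma>] by simp
    ultimately show ?thesis by simp
  qed
  have C0: "C \<noteq> {}"
  proof (cases s)
    case 0
    then have "Unc \<sigma> = U" unfolding Unc_def by auto
    then show ?thesis using U0 unfolding C_def by auto
  next
    case (Suc s') then show ?thesis unfolding C_def by auto
  qed
  have cov: "\<exists>c\<in>C. d_R K n x c \<le> r" if x: "x \<in> U" for x
  proof (cases "x \<in> Unc \<sigma>")
    case True
    have "d_R K n x x = 0" unfolding d_R_def using rk_zero by simp
    moreover have "x \<in> C" using True unfolding C_def by simp
    ultimately show ?thesis by (intro bexI[of _ x]) simp_all
  next
    case False
    then obtain i where "i < s" "\<sigma> i \<in> Cov x" using x unfolding Unc_def by auto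
    then show ?thesis unfolding C_def Cov_def by auto
  qed
  have "covering_radius K n C \<le> r"
    unfolding covering_radius_def U_def[symmetric]
  proof (subst Max_le_iff)
    show "finite ((\<lambda>x. Min ((\<lambda>c. d_R K n x c) ` C)) ` U)" using fU by simp
    show "(\<lambda>x. Min ((\<lambda>c. d_R K n x c) ` C)) ` U \<noteq> {}" using U0 by auto
    show "\<forall>a\<in>(\<lambda>x. Min ((\<lambda>c. d_R K n x c) ` C)) ` U. a \<le> r"
    proof
      fix a assume "a \<in> (\<lambda>x. Min ((\<lambda>c. d_R K n x c) ` C)) ` U"
      then obtain x where x: "x \<in> U" "a = Min ((\<lambda>c. d_R K n x c) ` C)" by auto
      show "a \<le> r" unfolding x(2) using fC C0 cov[OF x(1)] by (subst Min_le_iff) auto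
    qed
  qed
  moreover have "real (card C) \<le> real s + real N * (1 - real W / real N) ^ s"
  proof -
    have "real (card (Unc \<sigma>)) * real N ^ s \<le> real N * real (N - W) ^ s"
    proof -
      have "real (card (Unc \<sigma>) * N ^ s) \<le> real (N * (N - W) ^ s)" using bnd by (simp only: of_nat_le_iff)
      then show ?thesis by simp
    qed
    then have "real (card (Unc \<sigma>)) \<le> real N * real (N - W) ^ s / real N ^ s"
      using Npos by (simp add: pos_le_divide_eq)
    also have "\<dots> = real N * (1 - real W / real N) ^ s"
    proof -
      have "1 - real W / real N = (real N - real W) / real N" using Npos by (simp add: field_simps)
      then show ?thesis using WN by (simp add: of_nat_diff power_divide)
    qed
    finally show ?thesis using cC by linarith
  qed
  ultimately show ?thesis using CU C0 unfolding U_def N_def W_def by (intro exI[of _ C] conjI)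
qed

end

theorem proposition12:
  fixes K :: "'a::{field,finite} set" and q m n \<rho> :: nat
  assumes "is_subfield K"
    and "card K = q"
    and "card (UNIV :: 'a set) = q ^ m"
    and "n \<le> m"
    and "0 < \<rho>" and "\<rho> < n"
  shows "real (K_R K n \<rho>) \<le> real q ^ (m * n) / V q m n \<rho> * (1 + ln (V q m n \<rho>))"
proof -
  interpret rkctx K using assms(1) by unfold_locales
  define N where "N = real (card (vecs n :: (nat \<Rightarrow> 'a) set))"
  define W where "W = real (card {y \<in> (vecs n :: (nat \<Rightarrow> 'a) set). rk K n y \<le> \<rho>})"
  have VW: "V q m n \<rho> = W" unfolding W_def by (rule V_eq[OF assms(2,3)])
  have Nq: "N = real q ^ (m * n)" unfolding N_def card_vecs assms(3) by (simp add: power_mult)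
  have W1: "1 \<le> W"
  proof -
    have "(\<lambda>_. 0) \<in> {y \<in> (vecs n :: (nat \<Rightarrow> 'a) set). rk K n y \<le> \<rho>}" using zero_vecs rk_zero by simp
    moreover have "finite {y \<in> (vecs n :: (nat \<Rightarrow> 'a) set). rk K n y \<le> \<rho>}" by (rule finite_subset[OF _ finite_vecs]) auto
    ultimately have "card {y \<in> (vecs n :: (nat \<Rightarrow> 'a) set). rk K n y \<le> \<rho>} \<noteq> 0" by (metis card_0_eq empty_iff)
    then show ?thesis unfolding W_def by linarith
  qed
  have WN: "W \<le> N" unfolding W_def N_def by (simp add: card_mono finite_vecs)
  obtain s :: nat where s: "real s + N * (1 - W / N) ^ s \<le> N / W * (1 + ln W)"
    using final_ineq[OF W1 WN] by blast
  obtain C where C: "C \<subseteq> vecs n" "C \<noteq> {}" "covering_radius K n C \<le> \<rho>"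
    "real (card C) \<le> real s + N * (1 - W / N) ^ s"
    using cover_bound[of n \<rho> s] unfolding N_def W_def by blast
  have "K_R K n \<rho> \<le> card C"
  proof -
    have "{card C |C. C \<subseteq> (vecs n :: (nat \<Rightarrow> 'a) set) \<and> C \<noteq> {} \<and> covering_radius K n C \<le> \<rho>} \<subseteq> card ` Pow (vecs n :: (nat \<Rightarrow> 'a) set)"
      by blast
    then have fin: "finite {card C |C. C \<subseteq> (vecs n :: (nat \<Rightarrow> 'a) set) \<and> C \<noteq> {} \<and> covering_radius K n C \<le> \<rho>}"
      by (rule finite_subset) (simp add: finite_vecs)
    have "card C \<in> {card C |C. C \<subseteq> (vecs n :: (nat \<Rightarrow> 'a) set) \<and> C \<noteq> {} \<and> covering_radius K n C \<le> \<rho>}"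
      using C(1-3) by blast
    then show ?thesis unfolding K_R_def by (rule Min_le[OF fin])
  qed
  then have "real (K_R K n \<rho>) \<le> real (card C)" by simp
  also have "\<dots> \<le> N / W * (1 + ln W)" using C(4) s by linarith
  finally show ?thesis unfolding VW Nq .
qed

end
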